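(* ${\sf ITL}^0_{\circ}$ is complete for the class of expanding posets, and ${\sf ITL}^{\sf FS}_{\circ}$ is complete for the class of persistent posets; that is, every $\mathcal L_\circ$-formula valid on all expanding posets belongs to ${\sf ITL}^0_\circ$, and every $\mathcal L_\circ$-formula valid on all persistent posets belongs to ${\sf ITL}^{\sf FS}_\circ$.
   Context: Syntax: fix a countably infinite set $\mathbb P$ of propositional variables. $\mathcal L_\circ$ is given by $\varphi ::= \bot \mid p \mid \varphi\wedge\varphi \mid \varphi\vee\varphi \mid \varphi\to\varphi \mid \circ\varphi$ with $p\in\mathbb P$; $\neg\varphi:=\varphi\to\bot$. Semantics: a dynamical system is $(X,\mathcal T,f)$ with $(X,\mathcal T)$ a topological space and $f\colon X\to X$ continuous. A valuation assigns to each formula an open set with $[\![\bot]\!]=\varnothing$, $[\![\varphi\wedge\psi]\!]=[\![\varphi]\!]\cap[\![\psi]\!]$, $[\![\varphi\vee\psi]\!]=[\![\varphi]\!]\cup[\![\psi]\!]$, $[\![\varphi\to\psi]\!]=\big((X\setminus[\![\varphi]\!])\cup[\![\psi]\!]\big)^\circ$, $[\![\circ\varphi]\!]=f^{-1}[\![\varphi]\!]$. A formula is valid on a class if $[\![\varphi]\!]=X$ for every system of the class and every valuation. An expanding poset is a dynamical system whose topology is the up-set topology of a partial order $\preccurlyeq$ (open sets = upward closed sets); equivalently $f$ is monotone. A persistent poset is an expanding poset whose map $f$ is moreover open (equivalently: whenever $f(w)\preccurlyeq v'$ there is $w'\succcurlyeq w$ with $f(w')=v'$). Logics: ${\sf ITL}^0_\circ$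 is the least set of $\mathcal L_\circ$-formulas containing all substitution instances of the axioms of intuitionistic propositional logic and of (N1) $\neg\circ\bot$, (N2) $\circ\varphi\wedge\circ\psi\to\circ(\varphi\wedge\psi)$, (N3) $\circ(\varphi\vee\psi)\to\circ\varphi\vee\circ\psi$, (N4) $\circ(\varphi\to\psi)\to(\circ\varphi\to\circ\psi)$, closed under modus ponens and the rule from $\varphi$ infer $\circ\varphi$. ${\sf ITL}^{\sf FS}_\circ$ is defined in the same way but additionally with the axiom (N5) $(\circ\varphi\to\circ\psi)\to\circ(\varphi\to\psi)$. *)

theory Defs
  imports Main
begin

datatype form =
    Bot
  | Var nat
  | And form form
  | Or form form
  | Imp form form
  | Next form

definition Neg :: "form \<Rightarrow> form" where
  "Neg \<phi> = Imp \<phi> Bot"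

text \<open>A partial order le on a carrier set W; the up-set topology on W has as open
  sets exactly the upward closed subsets of W.\<close>

definition partial_order_on_set :: "'w set \<Rightarrow> ('w \<Rightarrow> 'w \<Rightarrow> bool) \<Rightarrow> bool" where
  "partial_order_on_set W le \<longleftrightarrow>
     (\<forall>w\<in>W. le w w) \<and>
     (\<forall>u\<in>W. \<forall>v\<in>W. \<forall>w\<in>W. le u v \<longrightarrow> le v w \<longrightarrow> le u w) \<and>
     (\<forall>u\<in>W. \<forall>v\<in>W. le u v \<longrightarrow> le v u \<longrightarrow> u = v)"

definition up_open :: "'w set \<Rightarrow> ('w \<Rightarrow> 'w \<Rightarrow> bool) \<Rightarrow> 'w set \<Rightarrow> bool" where
  "up_open W le S \<longleftrightarrow> S \<subseteq> W \<and> (\<forall>u\<in>S. \<forall>v\<in>W. le u v \<longrightarrow> v \<in> S)"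

definition up_interior :: "'w set \<Rightarrow> ('w \<Rightarrow> 'w \<Rightarrow> bool) \<Rightarrow> 'w set \<Rightarrow> 'w set" where
  "up_interior W le S = {w \<in> W. \<forall>v\<in>W. le w v \<longrightarrow> v \<in> S}"

text \<open>Expanding poset: f : W \<rightarrow> W continuous for the up-set topology, i.e. monotone.\<close>
definition expanding_poset :: "'w set \<Rightarrow> ('w \<Rightarrow> 'w \<Rightarrow> bool) \<Rightarrow> ('w \<Rightarrow> 'w) \<Rightarrow> bool" where
  "expanding_poset W le f \<longleftrightarrow>
     partial_order_on_set W le \<and>
     (\<forall>w\<in>W. f w \<in> W) \<and>
     (\<forall>u\<in>W. \<forall>v\<in>W. le u v \<longrightarrow> le (f u) (f v))"

text \<open>Persistent poset: expanding poset whose map is moreover open.\<close>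
definition persistent_poset :: "'w set \<Rightarrow> ('w \<Rightarrow> 'w \<Rightarrow> bool) \<Rightarrow> ('w \<Rightarrow> 'w) \<Rightarrow> bool" where
  "persistent_poset W le f \<longleftrightarrow>
     expanding_poset W le f \<and>
     (\<forall>w\<in>W. \<forall>v'\<in>W. le (f w) v' \<longrightarrow> (\<exists>w'\<in>W. le w w' \<and> f w' = v'))"

fun eval :: "'w set \<Rightarrow> ('w \<Rightarrow> 'w \<Rightarrow> bool) \<Rightarrow> ('w \<Rightarrow> 'w) \<Rightarrow> (nat \<Rightarrow> 'w set) \<Rightarrow> form \<Rightarrow> 'w set" where
  "eval W le f V Bot = {}"
| "eval W le f V (Var p) = V p"
| "eval W le f V (And \<phi> \<psi>) = eval W le f V \<phi> \<inter> eval W le f V \<psi>"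
| "eval W le f V (Or \<phi> \<psi>) = eval W le f V \<phi> \<union> eval W le f V \<psi>"
| "eval W le f V (Imp \<phi> \<psi>) =
     up_interior W le ((W - eval W le f V \<phi>) \<union> eval W le f V \<psi>)"
| "eval W le f V (Next \<phi>) = {w \<in> W. f w \<in> eval W le f V \<phi>}"

definition valuation :: "'w set \<Rightarrow> ('w \<Rightarrow> 'w \<Rightarrow> bool) \<Rightarrow> (nat \<Rightarrow> 'w set) \<Rightarrow> bool" where
  "valuation W le V \<longleftrightarrow> (\<forall>p. up_open W le (V p))"

text \<open>Since HOL cannot quantify
  over types inside a formula, the carriers range over all subsets of the fixed type
  form set set (of cardinality beyond the continuum).\<close>

type_synonym world = "form set set"

definition valid_expanding :: "form \<Rightarrow> bool" where
  "valid_expanding \<phi> \<longleftrightarrow>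
     (\<forall>(W :: world set) le f V. expanding_poset W le f \<longrightarrow> valuation W le V \<longrightarrow>
        eval W le f V \<phi> = W)"

definition valid_persistent :: "form \<Rightarrow> bool" where
  "valid_persistent \<phi> \<longleftrightarrow>
     (\<forall>(W :: world set) le f V. persistent_poset W le f \<longrightarrow> valuation W le V \<longrightarrow>
        eval W le f V \<phi> = W)"

inductive deriv :: "bool \<Rightarrow> form \<Rightarrow> bool" for fs :: bool where
  ax_K: "deriv fs (Imp \<phi> (Imp \<psi> \<phi>))"
| ax_S: "deriv fs (Imp (Imp \<phi> (Imp \<psi> \<chi>)) (Imp (Imp \<phi> \<psi>) (Imp \<phi> \<chi>)))"
| ax_conjE1: "deriv fs (Imp (And \<phi> \<psi>) \<phi>)"
| ax_conjE2: "deriv fs (Imp (And \<phi> \<psi>) \<psi>)"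
| ax_conjI: "deriv fs (Imp \<phi> (Imp \<psi> (And \<phi> \<psi>)))"
| ax_disjI1: "deriv fs (Imp \<phi> (Or \<phi> \<psi>))"
| ax_disjI2: "deriv fs (Imp \<psi> (Or \<phi> \<psi>))"
| ax_disjE: "deriv fs (Imp (Imp \<phi> \<chi>) (Imp (Imp \<psi> \<chi>) (Imp (Or \<phi> \<psi>) \<chi>)))"
| ax_efq: "deriv fs (Imp Bot \<phi>)"
| ax_N1: "deriv fs (Neg (Next Bot))"
| ax_N2: "deriv fs (Imp (And (Next \<phi>) (Next \<psi>)) (Next (And \<phi> \<psi>)))"
| ax_N3: "deriv fs (Imp (Next (Or \<phi> \<psi>)) (Or (Next \<phi>) (Next \<psi>)))"
| ax_N4: "deriv fs (Imp (Next (Imp \<phi> \<psi>)) (Imp (Next \<phi>) (Next \<psi>)))"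
| ax_N5: "fs \<Longrightarrow> deriv fs (Imp (Imp (Next \<phi>) (Next \<psi>)) (Next (Imp \<phi> \<psi>)))"
| mp: "deriv fs (Imp \<phi> \<psi>) \<Longrightarrow> deriv fs \<phi> \<Longrightarrow> deriv fs \<psi>"
| nec: "deriv fs \<phi> \<Longrightarrow> deriv fs (Next \<phi>)"

definition ITL0 :: "form \<Rightarrow> bool" where
  "ITL0 = deriv False"

definition ITLFS :: "form \<Rightarrow> bool" where
  "ITLFS = deriv True"

end

theory Submission imports Defs begin

inductive ded :: "bool \<Rightarrow> form set \<Rightarrow> form \<Rightarrow> bool" for fs \<Gamma> where
  hyp: "\<phi> \<in> \<Gamma> \<Longrightarrow> ded fs \<Gamma> \<phi>"
| thmd: "deriv fs \<phi> \<Longrightarrow> ded fs \<Gamma> \<phi>"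
| mpd: "ded fs \<Gamma> (Imp \<phi> \<psi>) \<Longrightarrow> ded fs \<Gamma> \<phi> \<Longrightarrow> ded fs \<Gamma> \<psi>"

lemma ded_mono: "ded fs \<Gamma> \<phi> \<Longrightarrow> \<Gamma> \<subseteq> \<Delta> \<Longrightarrow> ded fs \<Delta> \<phi>"
  by (induction rule: ded.induct) (auto intro: ded.intros)

lemma deriv_id: "deriv fs (Imp \<phi> \<phi>)"
  by (meson deriv.ax_K deriv.ax_S deriv.mp)

lemma deduction: "ded fs (insert a \<Gamma>) b \<Longrightarrow> ded fs \<Gamma> (Imp a b)"
proof (induction rule: ded.induct)
  case (hyp \<phi>)
  show ?case
  proof (cases "\<phi> = a")
    case True
    then show ?thesis using deriv_id ded.thmd by blast
  next
    case False
    then have "\<phi> \<in> \<Gamma>" using hyp by blast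
    then show ?thesis by (meson ded.hyp ded.mpd ded.thmd deriv.ax_K)
  qed
next
  case (thmd \<phi>)
  then show ?case by (meson ded.mpd ded.thmd deriv.ax_K)
next
  case (mpd \<phi> \<psi>)
  then show ?case by (meson ded.mpd ded.thmd deriv.ax_S)
qed

lemma deduction_iff: "ded fs (insert a \<Gamma>) b \<longleftrightarrow> ded fs \<Gamma> (Imp a b)"
  by (meson deduction ded.hyp ded.mpd ded_mono insertI1 subset_insertI)

lemma ded_empty: "ded fs {} \<phi> \<Longrightarrow> deriv fs \<phi>"
  by (induction rule: ded.induct) (auto intro: deriv.intros)

lemma ded_chain: "ded fs \<Gamma> \<phi> \<Longrightarrow> \<Gamma> = \<Union>C \<Longrightarrow> C \<noteq> {} \<Longrightarrow> subset.chain A C \<Longrightarrow> \<exists>X\<in>C. ded fs X \<phi>"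
proof (induction rule: ded.induct)
  case (hyp \<phi>)
  then show ?case using ded.hyp by blast
next
  case (thmd \<phi>)
  then show ?case using ded.thmd by blast
next
  case (mpd \<phi> \<psi>)
  then obtain X Y where X: "X \<in> C" "ded fs X (Imp \<phi> \<psi>)" and Y: "Y \<in> C" "ded fs Y \<phi>" by blast
  have "X \<subseteq> Y \<or> Y \<subseteq> X" using mpd.prems(3) X Y unfolding subset.chain_def by blast
  then show ?case using X Y by (meson ded.mpd ded_mono)
qed

definition pt :: "bool \<Rightarrow> form set \<Rightarrow> bool" where
  "pt fs \<Gamma> \<longleftrightarrow> (\<forall>\<phi>. ded fs \<Gamma> \<phi> \<longrightarrow> \<phi> \<in> \<Gamma>) \<and> Bot \<notin> \<Gamma> \<and> (\<forall>a b. Or a b \<in> \<Gamma> \<longrightarrow> a \<in> \<Gamma> \<or> b \<in> \<Gamma>)"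

lemma lindenbaum:
  assumes ne: "D \<noteq> {}"
    and orc: "\<And>d1 d2. d1 \<in> D \<Longrightarrow> d2 \<in> D \<Longrightarrow> \<exists>c\<in>D. deriv fs (Imp (Or d1 d2) c)"
    and nd: "\<And>d. d \<in> D \<Longrightarrow> \<not> ded fs \<Gamma> d"
  shows "\<exists>M. \<Gamma> \<subseteq> M \<and> pt fs M \<and> M \<inter> D = {}"
proof -
  define A where "A = {\<Delta>. \<Gamma> \<subseteq> \<Delta> \<and> (\<forall>d\<in>D. \<not> ded fs \<Delta> d)}"
  have "A \<noteq> {}" using nd A_def by blast
  moreover have "\<Union>C \<in> A" if "C \<noteq> {}" "subset.chain A C" for C
  proof -
    have "\<Gamma> \<subseteq> \<Union>C" using that unfolding A_def subset.chain_def by blast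
    moreover have "\<not> ded fs (\<Union>C) d" if "d \<in> D" for d
    proof
      assume "ded fs (\<Union>C) d"
      then obtain X where "X \<in> C" "ded fs X d" using ded_chain \<open>C \<noteq> {}\<close> \<open>subset.chain A C\<close> by blast
      then show False using \<open>subset.chain A C\<close> \<open>d \<in> D\<close> unfolding A_def subset.chain_def by blast
    qed
    ultimately show ?thesis unfolding A_def by blast
  qed
  ultimately obtain M where M: "M \<in> A" and mx: "\<And>X. X \<in> A \<Longrightarrow> M \<subseteq> X \<Longrightarrow> X = M"
    using subset_Zorn_nonempty[of A] by blast
  have MD: "\<And>d. d \<in> D \<Longrightarrow> \<not> ded fs M d" using M A_def by blast
  have ext: "\<exists>d\<in>D. ded fs M (Imp a d)" if "a \<notin> M" for a
  proof (rule ccontr)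
    assume "\<not> ?thesis"
    then have "\<forall>d\<in>D. \<not> ded fs (insert a M) d" by (simp add: deduction_iff)
    then have "insert a M \<in> A" using M unfolding A_def by blast
    then show False using mx[of "insert a M"] that by blast
  qed
  have cl: "\<phi> \<in> M" if "ded fs M \<phi>" for \<phi>
  proof (rule ccontr)
    assume "\<phi> \<notin> M"
    then obtain d where "d \<in> D" "ded fs M (Imp \<phi> d)" using ext by blast
    then show False using MD that ded.mpd by blast
  qed
  have bot: "Bot \<notin> M"
  proof
    assume "Bot \<in> M"
    obtain d where "d \<in> D" using ne by blast
    then show False using MD \<open>Bot \<in> M\<close> by (meson ded.hyp ded.mpd ded.thmd deriv.ax_efq)
  qed
  have pr: "a \<in> M \<or> b \<in> M" if "Or a b \<in> M" for a b
  proof (rule ccontr)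
    assume "\<not> ?thesis"
    then obtain d1 d2 where d: "d1 \<in> D" "d2 \<in> D" "ded fs M (Imp a d1)" "ded fs M (Imp b d2)"
      using ext by blast
    obtain c where c: "c \<in> D" "deriv fs (Imp (Or d1 d2) c)" using orc d by blast
    have "ded fs (insert a M) (Or d1 d2)"
      using d(3) unfolding deduction_iff[symmetric] by (meson ded.mpd ded.thmd deriv.ax_disjI1)
    then have i1: "ded fs M (Imp a (Or d1 d2))" by (rule deduction)
    have "ded fs (insert b M) (Or d1 d2)"
      using d(4) unfolding deduction_iff[symmetric] by (meson ded.mpd ded.thmd deriv.ax_disjI2)
    then have i2: "ded fs M (Imp b (Or d1 d2))" by (rule deduction)
    have "ded fs M (Or d1 d2)"
      using i1 i2 that by (meson ded.hyp ded.mpd ded.thmd deriv.ax_disjE)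
    then have "ded fs M c" using c ded.mpd ded.thmd by blast
    then show False using MD c by blast
  qed
  have "pt fs M" unfolding pt_def using cl bot pr by blast
  moreover have "\<Gamma> \<subseteq> M" using M A_def by blast
  moreover have "M \<inter> D = {}" using MD cl ded.hyp by blast
  ultimately show ?thesis by blast
qed

definition S :: "form set \<Rightarrow> form set" where "S \<Gamma> = {\<phi>. Next \<phi> \<in> \<Gamma>}"

lemma pt_mp: "pt fs \<Gamma> \<Longrightarrow> Imp a b \<in> \<Gamma> \<Longrightarrow> a \<in> \<Gamma> \<Longrightarrow> b \<in> \<Gamma>"
  unfolding pt_def by (meson ded.hyp ded.mpd)

lemma pt_thm: "pt fs \<Gamma> \<Longrightarrow> deriv fs a \<Longrightarrow> a \<in> \<Gamma>"
  unfolding pt_def by (meson ded.thmd)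

lemma pt_ded: "pt fs \<Gamma> \<Longrightarrow> ded fs \<Gamma> a \<Longrightarrow> a \<in> \<Gamma>"
  unfolding pt_def by blast

lemma ded_next: "ded fs \<Delta> \<phi> \<Longrightarrow> ded fs (Next ` \<Delta>) (Next \<phi>)"
proof (induction rule: ded.induct)
  case (hyp \<phi>)
  then show ?case by (simp add: ded.hyp)
next
  case (thmd \<phi>)
  then show ?case by (simp add: ded.thmd deriv.nec)
next
  case (mpd \<phi> \<psi>)
  then show ?case by (meson ded.mpd ded.thmd deriv.ax_N4)
qed

lemma pt_S: assumes "pt fs \<Gamma>" shows "pt fs (S \<Gamma>)"
proof -
  have "\<phi> \<in> S \<Gamma>" if "ded fs (S \<Gamma>) \<phi>" for \<phi>
  proof -
    have "ded fs (Next ` S \<Gamma>) (Next \<phi>)" using ded_next that by blast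
    moreover have "Next ` S \<Gamma> \<subseteq> \<Gamma>" unfolding S_def by blast
    ultimately have "ded fs \<Gamma> (Next \<phi>)" using ded_mono by blast
    then show ?thesis using assms pt_ded S_def by blast
  qed
  moreover have "Bot \<notin> S \<Gamma>"
  proof
    assume "Bot \<in> S \<Gamma>"
    then have "Next Bot \<in> \<Gamma>" by (simp add: S_def)
    moreover have "Imp (Next Bot) Bot \<in> \<Gamma>" using assms pt_thm deriv.ax_N1 unfolding Neg_def by blast
    ultimately show False using assms pt_mp unfolding pt_def by blast
  qed
  moreover have "a \<in> S \<Gamma> \<or> b \<in> S \<Gamma>" if "Or a b \<in> S \<Gamma>" for a b
  proof -
    have "Or (Next a) (Next b) \<in> \<Gamma>" using that assms pt_mp pt_thm deriv.ax_N3 unfolding S_def by blast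
    then show ?thesis using assms unfolding pt_def S_def by blast
  qed
  ultimately show ?thesis unfolding pt_def by blast
qed

lemma next_and: "deriv fs (Imp (Next (And a b)) (Next a))" "deriv fs (Imp (Next (And a b)) (Next b))"
  by (meson deriv.ax_N4 deriv.ax_conjE1 deriv.ax_conjE2 deriv.mp deriv.nec)+

lemma next_lemma:
  assumes "ded fs G \<chi>" "G = \<Gamma> \<union> Next ` A" "A \<noteq> {}" "\<And>a b. a \<in> A \<Longrightarrow> b \<in> A \<Longrightarrow> And a b \<in> A"
  shows "\<exists>a\<in>A. ded fs \<Gamma> (Imp (Next a) \<chi>)"
  using assms(1,2)
proof (induction rule: ded.induct)
  case (hyp \<phi>)
  show ?case
  proof (cases "\<phi> \<in> \<Gamma>")
    case True
    obtain a where "a \<in> A" using assms(3) by blast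
    then show ?thesis using True by (meson ded.hyp ded.mpd ded.thmd deriv.ax_K)
  next
    case False
    then obtain a where "a \<in> A" "\<phi> = Next a" using hyp by blast
    then show ?thesis using deriv_id ded.thmd by blast
  qed
next
  case (thmd \<phi>)
  obtain a where "a \<in> A" using assms(3) by blast
  then show ?case using thmd by (meson ded.mpd ded.thmd deriv.ax_K)
next
  case (mpd \<phi> \<psi>)
  then obtain a1 a2 where a: "a1 \<in> A" "a2 \<in> A" "ded fs \<Gamma> (Imp (Next a1) (Imp \<phi> \<psi>))" "ded fs \<Gamma> (Imp (Next a2) \<phi>)"
    by blast
  let ?c = "And a1 a2"
  have "ded fs (insert (Next ?c) \<Gamma>) (Next a1)" "ded fs (insert (Next ?c) \<Gamma>) (Next a2)"
    using next_and by (meson ded.hyp ded.mpd ded.thmd insertI1)+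
  moreover have "ded fs (insert (Next ?c) \<Gamma>) (Imp (Next a1) (Imp \<phi> \<psi>))" "ded fs (insert (Next ?c) \<Gamma>) (Imp (Next a2) \<phi>)"
    using a(3,4) ded_mono subset_insertI by blast+
  ultimately have "ded fs (insert (Next ?c) \<Gamma>) \<psi>" by (meson ded.mpd)
  then have "ded fs \<Gamma> (Imp (Next ?c) \<psi>)" by (rule deduction)
  moreover have "?c \<in> A" using assms(4) a(1,2) by blast
  ultimately show ?case by blast
qed

lemma next_or: "deriv fs (Imp (Or (Next a) (Next b)) (Next (Or a b)))"
proof -
  have 1: "deriv fs (Imp (Next a) (Next (Or a b)))" by (meson deriv.ax_N4 deriv.ax_disjI1 deriv.mp deriv.nec)
  have 2: "deriv fs (Imp (Next b) (Next (Or a b)))" by (meson deriv.ax_N4 deriv.ax_disjI2 deriv.mp deriv.nec)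
  show ?thesis using 1 2 by (meson deriv.ax_disjE deriv.mp)
qed

lemma persist:
  assumes G: "pt True \<Gamma>" and D: "pt True \<Delta>" and sub: "S \<Gamma> \<subseteq> \<Delta>"
  shows "\<exists>M. \<Gamma> \<subseteq> M \<and> pt True M \<and> S M = \<Delta>"
proof -
  define DD where "DD = {Next \<psi> | \<psi>. \<psi> \<notin> \<Delta>}"
  have ne: "DD \<noteq> {}" using D unfolding DD_def pt_def by blast
  have orc: "\<exists>c\<in>DD. deriv True (Imp (Or d1 d2) c)" if dd: "d1 \<in> DD" "d2 \<in> DD" for d1 d2
  proof -
    obtain a b where ab: "d1 = Next a" "d2 = Next b" "a \<notin> \<Delta>" "b \<notin> \<Delta>" using dd DD_def by blast
    then have "Or a b \<notin> \<Delta>" using D pt_def by blast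
    then show ?thesis using ab next_or unfolding DD_def by blast
  qed
  have andc: "And a b \<in> \<Delta>" if "a \<in> \<Delta>" "b \<in> \<Delta>" for a b
    using that D pt_mp pt_thm deriv.ax_conjI by blast
  have dne: "\<Delta> \<noteq> {}" using D pt_thm deriv_id by blast
  have nd: "\<not> ded True (\<Gamma> \<union> Next ` \<Delta>) d" if dd: "d \<in> DD" for d
  proof
    assume h: "ded True (\<Gamma> \<union> Next ` \<Delta>) d"
    obtain \<psi> where p: "d = Next \<psi>" "\<psi> \<notin> \<Delta>" using dd DD_def by blast
    obtain a where a: "a \<in> \<Delta>" "ded True \<Gamma> (Imp (Next a) (Next \<psi>))"
      using next_lemma[OF h refl dne andc] p by blast
    have "Imp (Next a) (Next \<psi>) \<in> \<Gamma>" using a G pt_ded by blast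
    moreover have "Imp (Imp (Next a) (Next \<psi>)) (Next (Imp a \<psi>)) \<in> \<Gamma>"
      using pt_thm[OF G deriv.ax_N5[OF TrueI]] .
    ultimately have "Next (Imp a \<psi>) \<in> \<Gamma>" using pt_mp[OF G] by blast
    then have "Imp a \<psi> \<in> \<Delta>" using sub S_def by blast
    then show False using a(1) p(2) pt_mp[OF D] by blast
  qed
  obtain M where M: "\<Gamma> \<union> Next ` \<Delta> \<subseteq> M" "pt True M" "M \<inter> DD = {}"
    using lindenbaum[OF ne orc nd] by blast
  have "S M = \<Delta>"
  proof
    show "S M \<subseteq> \<Delta>" using M(3) unfolding S_def DD_def by blast
    show "\<Delta> \<subseteq> S M" using M(1) unfolding S_def by blast
  qed
  then show ?thesis using M by blast
qed

lemma lind1: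
  assumes "\<not> ded fs \<Gamma> \<phi>" shows "\<exists>M. \<Gamma> \<subseteq> M \<and> pt fs M \<and> \<phi> \<notin> M"
proof -
  have "deriv fs (Imp (Or \<phi> \<phi>) \<phi>)" using deriv_id by (meson deriv.ax_disjE deriv.mp)
  then have "\<exists>c\<in>{\<phi>}. deriv fs (Imp (Or d1 d2) c)" if "d1 \<in> {\<phi>}" "d2 \<in> {\<phi>}" for d1 d2
    using that by blast
  from lindenbaum[of "{\<phi>}", OF _ this] assms show ?thesis by blast
qed

definition cW :: "bool \<Rightarrow> world set" where "cW fs = {{\<Gamma>} | \<Gamma>. pt fs \<Gamma>}"
definition cle :: "world \<Rightarrow> world \<Rightarrow> bool" where "cle a b \<longleftrightarrow> \<Union>a \<subseteq> \<Union>b"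
definition cf :: "world \<Rightarrow> world" where "cf a = {S (\<Union>a)}"
definition cV :: "bool \<Rightarrow> nat \<Rightarrow> world set" where "cV fs p = {w \<in> cW fs. Var p \<in> \<Union>w}"

lemma cW_iff: "w \<in> cW fs \<longleftrightarrow> (\<exists>\<Gamma>. w = {\<Gamma>} \<and> pt fs \<Gamma>)"
  unfolding cW_def by blast

lemma cf_W: "w \<in> cW fs \<Longrightarrow> cf w \<in> cW fs"
  unfolding cW_iff cf_def using pt_S by auto

lemma pt_and: assumes G: "pt fs \<Gamma>" shows "(a \<in> \<Gamma> \<and> b \<in> \<Gamma>) = (And a b \<in> \<Gamma>)"
proof
  assume "a \<in> \<Gamma> \<and> b \<in> \<Gamma>"
  then show "And a b \<in> \<Gamma>" using pt_mp[OF G pt_mp[OF G pt_thm[OF G deriv.ax_conjI]]] by blast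
next
  assume h: "And a b \<in> \<Gamma>"
  have "a \<in> \<Gamma>" by (rule pt_mp[OF G pt_thm[OF G deriv.ax_conjE1] h])
  moreover have "b \<in> \<Gamma>" by (rule pt_mp[OF G pt_thm[OF G deriv.ax_conjE2] h])
  ultimately show "a \<in> \<Gamma> \<and> b \<in> \<Gamma>" ..
qed

lemma pt_or: assumes G: "pt fs \<Gamma>" shows "(a \<in> \<Gamma> \<or> b \<in> \<Gamma>) = (Or a b \<in> \<Gamma>)"
proof
  assume "a \<in> \<Gamma> \<or> b \<in> \<Gamma>"
  then show "Or a b \<in> \<Gamma>"
  proof
    assume "a \<in> \<Gamma>" then show ?thesis by (rule pt_mp[OF G pt_thm[OF G deriv.ax_disjI1]])
  next
    assume "b \<in> \<Gamma>" then show ?thesis by (rule pt_mp[OF G pt_thm[OF G deriv.ax_disjI2]])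
  qed
next
  assume "Or a b \<in> \<Gamma>" then show "a \<in> \<Gamma> \<or> b \<in> \<Gamma>" using G unfolding pt_def by blast
qed

lemma truth:
  "\<forall>w\<in>cW fs. (w \<in> eval (cW fs) cle cf (cV fs) \<phi>) = (\<phi> \<in> \<Union>w)"
proof (induction \<phi>)
  case Bot
  then show ?case by (auto simp: cW_def pt_def)
next
  case (Var x)
  then show ?case by (simp add: cV_def)
next
  case (And \<phi>1 \<phi>2)
  show ?case
  proof
    fix w assume w: "w \<in> cW fs"
    then obtain \<Gamma> where G: "w = {\<Gamma>}" "pt fs \<Gamma>" unfolding cW_def by blast
    have e1: "(w \<in> eval (cW fs) cle cf (cV fs) \<phi>1) = (\<phi>1 \<in> \<Gamma>)" using And.IH(1) w G(1) by simp
    have e2: "(w \<in> eval (cW fs) cle cf (cV fs) \<phi>2) = (\<phi>2 \<in> \<Gamma>)" using And.IH(2) w G(1) by simp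
    have "(w \<in> eval (cW fs) cle cf (cV fs) (And \<phi>1 \<phi>2)) = (\<phi>1 \<in> \<Gamma> \<and> \<phi>2 \<in> \<Gamma>)"
      using e1 e2 by simp
    also have "\<dots> = (And \<phi>1 \<phi>2 \<in> \<Gamma>)" using pt_and[OF G(2)] by simp
    finally show "(w \<in> eval (cW fs) cle cf (cV fs) (And \<phi>1 \<phi>2)) = (And \<phi>1 \<phi>2 \<in> \<Union>w)"
      using G(1) by simp
  qed
next
  case (Or \<phi>1 \<phi>2)
  show ?case
  proof
    fix w assume w: "w \<in> cW fs"
    then obtain \<Gamma> where G: "w = {\<Gamma>}" "pt fs \<Gamma>" unfolding cW_def by blast
    have e1: "(w \<in> eval (cW fs) cle cf (cV fs) \<phi>1) = (\<phi>1 \<in> \<Gamma>)" using Or.IH(1) w G(1) by simp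
    have e2: "(w \<in> eval (cW fs) cle cf (cV fs) \<phi>2) = (\<phi>2 \<in> \<Gamma>)" using Or.IH(2) w G(1) by simp
    have "(w \<in> eval (cW fs) cle cf (cV fs) (Or \<phi>1 \<phi>2)) = (\<phi>1 \<in> \<Gamma> \<or> \<phi>2 \<in> \<Gamma>)"
      using e1 e2 by simp
    also have "\<dots> = (Or \<phi>1 \<phi>2 \<in> \<Gamma>)" using pt_or[OF G(2)] by simp
    finally show "(w \<in> eval (cW fs) cle cf (cV fs) (Or \<phi>1 \<phi>2)) = (Or \<phi>1 \<phi>2 \<in> \<Union>w)"
      using G(1) by simp
  qed
next
  case (Imp \<phi>1 \<phi>2)
  show ?case
  proof
    fix w assume w: "w \<in> cW fs"
    then obtain \<Gamma> where G: "w = {\<Gamma>}" "pt fs \<Gamma>" unfolding cW_def by blast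
    have "(w \<in> eval (cW fs) cle cf (cV fs) (Imp \<phi>1 \<phi>2)) \<longleftrightarrow>
          (\<forall>v\<in>cW fs. \<Gamma> \<subseteq> \<Union>v \<longrightarrow> \<phi>1 \<in> \<Union>v \<longrightarrow> \<phi>2 \<in> \<Union>v)"
    proof -
      have "(w \<in> eval (cW fs) cle cf (cV fs) (Imp \<phi>1 \<phi>2)) \<longleftrightarrow>
          (\<forall>v\<in>cW fs. cle w v \<longrightarrow> v \<in> (cW fs - eval (cW fs) cle cf (cV fs) \<phi>1) \<union> eval (cW fs) cle cf (cV fs) \<phi>2)"
        using w by (simp add: up_interior_def)
      also have "\<dots> \<longleftrightarrow> (\<forall>v\<in>cW fs. \<Gamma> \<subseteq> \<Union>v \<longrightarrow> \<phi>1 \<in> \<Union>v \<longrightarrow> \<phi>2 \<in> \<Union>v)"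
      proof (rule ball_cong[OF refl])
        fix v assume v: "v \<in> cW fs"
        have e1: "(v \<in> eval (cW fs) cle cf (cV fs) \<phi>1) = (\<phi>1 \<in> \<Union>v)" using Imp.IH(1) v by blast
        have e2: "(v \<in> eval (cW fs) cle cf (cV fs) \<phi>2) = (\<phi>2 \<in> \<Union>v)" using Imp.IH(2) v by blast
        show "(cle w v \<longrightarrow> v \<in> (cW fs - eval (cW fs) cle cf (cV fs) \<phi>1) \<union> eval (cW fs) cle cf (cV fs) \<phi>2)
           = (\<Gamma> \<subseteq> \<Union>v \<longrightarrow> \<phi>1 \<in> \<Union>v \<longrightarrow> \<phi>2 \<in> \<Union>v)"
          using e1 e2 v G(1) unfolding cle_def by auto
      qed
      finally show ?thesis .
    qed
    also have "\<dots> \<longleftrightarrow> Imp \<phi>1 \<phi>2 \<in> \<Gamma>"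
    proof
      assume L: "\<forall>v\<in>cW fs. \<Gamma> \<subseteq> \<Union>v \<longrightarrow> \<phi>1 \<in> \<Union>v \<longrightarrow> \<phi>2 \<in> \<Union>v"
      show "Imp \<phi>1 \<phi>2 \<in> \<Gamma>"
      proof (rule ccontr)
        assume "Imp \<phi>1 \<phi>2 \<notin> \<Gamma>"
        then have "\<not> ded fs \<Gamma> (Imp \<phi>1 \<phi>2)" using G(2) pt_ded by blast
        then have "\<not> ded fs (insert \<phi>1 \<Gamma>) \<phi>2" by (simp add: deduction_iff)
        from lind1[OF this] obtain M where M: "insert \<phi>1 \<Gamma> \<subseteq> M" "pt fs M" "\<phi>2 \<notin> M" by (elim exE conjE)
        have "{M} \<in> cW fs" using M(2) unfolding cW_def by blast
        then have "\<phi>1 \<in> M \<longrightarrow> \<phi>2 \<in> M" using L M(1) by auto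
        then show False using M by blast
      qed
    next
      assume R: "Imp \<phi>1 \<phi>2 \<in> \<Gamma>"
      show "\<forall>v\<in>cW fs. \<Gamma> \<subseteq> \<Union>v \<longrightarrow> \<phi>1 \<in> \<Union>v \<longrightarrow> \<phi>2 \<in> \<Union>v"
      proof (intro ballI impI)
        fix v assume v: "v \<in> cW fs" "\<Gamma> \<subseteq> \<Union>v" "\<phi>1 \<in> \<Union>v"
        then obtain \<Delta> where D: "v = {\<Delta>}" "pt fs \<Delta>" unfolding cW_def by blast
        have "Imp \<phi>1 \<phi>2 \<in> \<Delta>" "\<phi>1 \<in> \<Delta>" using R v D by auto
        then have "\<phi>2 \<in> \<Delta>" using pt_mp[OF D(2)] by blast
        then show "\<phi>2 \<in> \<Union>v" using D by simp
      qed
    qed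
    finally show "(w \<in> eval (cW fs) cle cf (cV fs) (Imp \<phi>1 \<phi>2)) = (Imp \<phi>1 \<phi>2 \<in> \<Union>w)"
      using G by simp
  qed
next
  case (Next \<phi>)
  show ?case
  proof
    fix w assume w: "w \<in> cW fs"
    then have cw: "cf w \<in> cW fs" by (rule cf_W)
    have e: "(cf w \<in> eval (cW fs) cle cf (cV fs) \<phi>) = (\<phi> \<in> \<Union>(cf w))" using Next.IH cw by blast
    have "(w \<in> eval (cW fs) cle cf (cV fs) (Next \<phi>)) = (cf w \<in> eval (cW fs) cle cf (cV fs) \<phi>)"
      using w by simp
    also have "\<dots> = (\<phi> \<in> S (\<Union>w))" using e by (simp add: cf_def)
    also have "\<dots> = (Next \<phi> \<in> \<Union>w)" by (simp add: S_def)
    finally show "(w \<in> eval (cW fs) cle cf (cV fs) (Next \<phi>)) = (Next \<phi> \<in> \<Union>w)" .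
  qed
qed

lemma c_expanding: "expanding_poset (cW fs) cle cf"
  unfolding expanding_poset_def partial_order_on_set_def
proof (intro conjI ballI impI)
  show "cf w \<in> cW fs" if "w \<in> cW fs" for w using cf_W that by blast
  show "cle w w" for w by (simp add: cle_def)
  show "cle u w" if "cle u v" "cle v w" for u v w using that by (simp add: cle_def)
  show "u = v" if u: "u \<in> cW fs" and v: "v \<in> cW fs" and "cle u v" "cle v u" for u v
  proof -
    obtain A where A: "u = {A}" using u unfolding cW_def by blast
    obtain B where B: "v = {B}" using v unfolding cW_def by blast
    show ?thesis using that(3,4) A B unfolding cle_def by simp
  qed
  show "cle (cf u) (cf v)" if "cle u v" for u v
    using that unfolding cle_def cf_def S_def by auto
qed

lemma c_persistent: "persistent_poset (cW True) cle cf"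
  unfolding persistent_poset_def
proof (intro conjI c_expanding ballI impI)
  fix w v' assume a: "w \<in> cW True" "v' \<in> cW True" "cle (cf w) v'"
  obtain \<Gamma> where G1: "w = {\<Gamma>}" "pt True \<Gamma>" using a(1) unfolding cW_iff by blast
  obtain \<Delta> where G2: "v' = {\<Delta>}" "pt True \<Delta>" using a(2) unfolding cW_iff by blast
  note G = G1 G2
  then have "S \<Gamma> \<subseteq> \<Delta>" using a(3) by (simp add: cle_def cf_def)
  then obtain M where M: "\<Gamma> \<subseteq> M" "pt True M" "S M = \<Delta>" using persist[OF G1(2) G2(2)] by blast
  show "\<exists>w'\<in>cW True. cle w w' \<and> cf w' = v'"
  proof (rule bexI[of _ "{M}"])
    show "{M} \<in> cW True" using M(2) unfolding cW_def by blast
    show "cle w {M} \<and> cf {M} = v'" using M G by (simp add: cle_def cf_def)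
  qed
qed

lemma c_val: "valuation (cW fs) cle (cV fs)"
  unfolding valuation_def up_open_def
proof (intro allI conjI ballI impI)
  fix p show "cV fs p \<subseteq> cW fs" unfolding cV_def by blast
  fix u v assume "u \<in> cV fs p" "v \<in> cW fs" "cle u v"
  then show "v \<in> cV fs p" unfolding cV_def cle_def by blast
qed

lemma completeness:
  assumes "\<And>w. w \<in> cW fs \<Longrightarrow> w \<in> eval (cW fs) cle cf (cV fs) \<phi>" shows "deriv fs \<phi>"
proof (rule ccontr)
  assume "\<not> deriv fs \<phi>"
  then have "\<not> ded fs {} \<phi>" using ded_empty by blast
  from lind1[OF this] obtain M where M: "pt fs M" "\<phi> \<notin> M" by (elim exE conjE)
  then have "{M} \<in> cW fs" unfolding cW_def by blast
  then have "{M} \<in> eval (cW fs) cle cf (cV fs) \<phi>" using assms by blast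
  then have "\<phi> \<in> \<Union>{M}" using truth[of fs \<phi>] \<open>{M} \<in> cW fs\<close> by blast
  then show False using M by simp
qed

theorem theorem5p7:
  shows "(\<forall>\<phi>. valid_expanding \<phi> \<longrightarrow> ITL0 \<phi>) \<and> (\<forall>\<phi>. valid_persistent \<phi> \<longrightarrow> ITLFS \<phi>)"
proof (intro conjI allI impI)
  fix \<phi> assume "valid_expanding \<phi>"
  then have "eval (cW False) cle cf (cV False) \<phi> = cW False"
    using c_expanding c_val unfolding valid_expanding_def by blast
  then show "ITL0 \<phi>" unfolding ITL0_def using completeness by blast
next
  fix \<phi> assume "valid_persistent \<phi>"
  then have "eval (cW True) cle cf (cV True) \<phi> = cW True"
    using c_persistent c_val unfolding valid_persistent_def by blast
  then show "ITLFS \<phi>" unfolding ITLFS_def using completeness by blast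
qed

end
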